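(* Let $R$ be a principal ideal domain. Then every prime ideal of $R[X]$ is power stable.
   Context: An ideal $I$ of the polynomial ring $R[X]$ over an integral domain $R$ is called power stable if $I^t\cap R = (I\cap R)^t$ for all integers $t\geq 1$. *)

theory Defs
  imports "HOL-Algebra.Algebra"
begin

primrec ideal_pow :: "('a, 'b) ring_scheme \<Rightarrow> 'a set \<Rightarrow> nat \<Rightarrow> 'a set" where
  "ideal_pow R I 0 = carrier R"
| "ideal_pow R I (Suc n) = ideal_prod R I (ideal_pow R I n)"

text \<open>For an ideal I of R[X] (= poly_ring R), the intersection I \<inter> R, where R is identified with
  the constant polynomials via poly_of_const.\<close>
definition contr :: "('a, 'b) ring_scheme \<Rightarrow> 'a list set \<Rightarrow> 'a set" where
  "contr R I = {a \<in> carrier R. ring.poly_of_const R a \<in> I}"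

definition power_stable :: "('a, 'b) ring_scheme \<Rightarrow> 'a list set \<Rightarrow> bool" where
  "power_stable R I \<longleftrightarrow>
     (\<forall>t::nat. t \<ge> 1 \<longrightarrow> contr R (ideal_pow (poly_ring R) I t) = ideal_pow R (contr R I) t)"

end

theory Submission
  imports Defs
begin

lemma (in ring) ideal_pow_ideal: "ideal I R \<Longrightarrow> ideal (ideal_pow R I n) R"
  by (induction n) (auto intro: ideal_prod_is_ideal oneideal)

lemma (in ring) ideal_pow_sub: "ideal I R \<Longrightarrow> ideal_pow R I (Suc n) \<subseteq> I"
  using ideal_prod_inter[of I "ideal_pow R I n"] ideal_pow_ideal by auto

lemma (in ring) pow_mem: "ideal I R \<Longrightarrow> x \<in> I \<Longrightarrow> x [^] n \<in> ideal_pow R I n"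
proof (induction n)
  case 0 then show ?case using ideal.Icarr by fastforce
next
  case (Suc n)
  have "x [^] Suc n = x \<otimes> x [^] n" using Suc ideal.Icarr nat_pow_Suc2 by metis
  then show ?case using Suc ideal_prod.prod by fastforce
qed

lemma (in cring) PIdl_one: "PIdl \<one> = carrier R"
  unfolding cgenideal_def by force

lemma (in cring) ideal_pow_PIdl: "a \<in> carrier R \<Longrightarrow> ideal_pow R (PIdl a) n = PIdl (a [^] n)"
proof (induction n)
  case 0 then show ?case using PIdl_one by simp
next
  case (Suc n)
  have "ideal_pow R (PIdl a) (Suc n) = (PIdl a) \<cdot> (PIdl (a [^] n))" using Suc by simp
  also have "\<dots> = Idl (PIdl (a \<otimes> a [^] n))"
    using ideal_prod_eq_genideal cgenideal_ideal Suc cgenideal_prod by simp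
  also have "\<dots> = PIdl (a \<otimes> a [^] n)"
  proof
    have c: "a \<otimes> a [^] n \<in> carrier R" using Suc by simp
    show "Idl (PIdl (a \<otimes> a [^] n)) \<subseteq> PIdl (a \<otimes> a [^] n)"
      by (rule genideal_minimal[OF cgenideal_ideal[OF c]]) simp
    show "PIdl (a \<otimes> a [^] n) \<subseteq> Idl (PIdl (a \<otimes> a [^] n))"
      by (rule genideal_self) (use ideal.Icarr[OF cgenideal_ideal[OF c]] in blast)
  qed
  finally show ?case using Suc by (simp add: nat_pow_Suc m_comm)
qed

definition (in ring) lin2 :: "'a \<Rightarrow> 'a \<Rightarrow> 'a set" where
  "lin2 a f = {a \<otimes> u \<oplus> f \<otimes> v | u v. u \<in> carrier R \<and> v \<in> carrier R}"

lemma (in cring) lin2_prod: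
  assumes "a \<in> carrier R" "b \<in> carrier R" "f \<in> carrier R" "x \<in> lin2 a f" "y \<in> lin2 b f"
  shows "x \<otimes> y \<in> lin2 (a \<otimes> b) f"
proof -
  obtain u v u' v' where uv: "u \<in> carrier R" "v \<in> carrier R" "u' \<in> carrier R" "v' \<in> carrier R"
    "x = a \<otimes> u \<oplus> f \<otimes> v" "y = b \<otimes> u' \<oplus> f \<otimes> v'" using assms unfolding lin2_def by auto
  have "x \<otimes> y = (a \<otimes> b) \<otimes> (u \<otimes> u') \<oplus> f \<otimes> (v \<otimes> (b \<otimes> u' \<oplus> f \<otimes> v') \<oplus> a \<otimes> u \<otimes> v')"
    using uv assms(1-3) by (simp add: l_distr r_distr m_ac a_ac)
  then show ?thesis using uv assms(1-3) unfolding lin2_def by blast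
qed

lemma (in cring) lin2_add:
  assumes "a \<in> carrier R" "f \<in> carrier R" "x \<in> lin2 a f" "y \<in> lin2 a f"
  shows "x \<oplus> y \<in> lin2 a f"
proof -
  obtain u v u' v' where uv: "u \<in> carrier R" "v \<in> carrier R" "u' \<in> carrier R" "v' \<in> carrier R"
    "x = a \<otimes> u \<oplus> f \<otimes> v" "y = a \<otimes> u' \<oplus> f \<otimes> v'" using assms unfolding lin2_def by auto
  have "x \<oplus> y = a \<otimes> (u \<oplus> u') \<oplus> f \<otimes> (v \<oplus> v')"
    using uv assms(1-2) by (simp add: l_distr r_distr a_ac)
  then show ?thesis using uv assms(1-2) unfolding lin2_def by blast
qed

lemma (in cring) ideal_pow_lin2:
  assumes "a \<in> carrier R" "f \<in> carrier R" "I \<subseteq> lin2 a f"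
  shows "ideal_pow R I n \<subseteq> lin2 (a [^] n) f"
proof (induction n)
  case 0
  { fix x assume "x \<in> carrier R"
    then have "x = \<one> \<otimes> x \<oplus> f \<otimes> \<zero>" using assms by simp
    then have "x \<in> lin2 \<one> f" unfolding lin2_def using \<open>x \<in> carrier R\<close> by blast }
  then show ?case by auto
next
  case (Suc n)
  show ?case
  proof
    fix x assume "x \<in> ideal_pow R I (Suc n)"
    then have "x \<in> I \<cdot> ideal_pow R I n" by simp
    then show "x \<in> lin2 (a [^] Suc n) f"
    proof (induction rule: ideal_prod.induct)
      case (prod i j)
      have "a [^] Suc n = a \<otimes> a [^] n" using assms by (simp add: nat_pow_Suc m_comm)
      then show ?case using lin2_prod[of a "a [^] n" f i j] assms Suc prod by auto
    next
      case (sum s1 s2)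
      then show ?case using lin2_add assms by auto
    qed
  qed
qed

context domain begin

lemma RX_domain: "domain (poly_ring R)"
  by (rule univ_poly_is_domain[OF carrier_is_subring])

lemma RX_carrier: "p \<in> carrier (poly_ring R) \<longleftrightarrow> polynomial (carrier R) p"
  by (rule univ_poly_carrier[symmetric])

lemma RX_set: "p \<in> carrier (poly_ring R) \<Longrightarrow> set p \<subseteq> carrier R"
  unfolding RX_carrier by (rule polynomial_incl)

lemma upd: "R\<lparr>carrier := carrier R\<rparr> = R" by simp

lemma poc_hom: "ring_hom_ring R (poly_ring R) poly_of_const"
  using canonical_embedding_ring_hom[OF carrier_is_subring] unfolding upd .

lemma poc_carrier: "a \<in> carrier R \<Longrightarrow> poly_of_const a \<in> carrier (poly_ring R)"
  by (rule ring_hom_closed[OF ring_hom_ring.homh[OF poc_hom]])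

lemma poc_const_term: assumes "a \<in> carrier R" shows "const_term (poly_of_const a) = a"
proof (cases "a = \<zero>")
  case True then show ?thesis by (simp add: poly_of_const_def const_term_def)
next
  case False
  then have "poly_of_const a = [] @ [a]" by (simp add: poly_of_const_def)
  then show ?thesis using const_term_eq_last[of "[]" a] assms by simp
qed

lemma poc_degree: "degree (poly_of_const a) = 0"
  by (cases "a = \<zero>") (simp_all add: poly_of_const_def)

lemma coeff_poc_mult:
  assumes "c \<in> carrier R" "g \<in> carrier (poly_ring R)"
  shows "coeff (poly_of_const c \<otimes>\<^bsub>poly_ring R\<^esub> g) i = c \<otimes> coeff g i"
proof (cases "c = \<zero>")
  case True
  then show ?thesis using assms RX_set[OF assms(2)] by (simp add: poly_of_const_def univ_poly_mult)
next
  case False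
  have "poly_of_const c \<otimes>\<^bsub>poly_ring R\<^esub> g = normalize (map (\<lambda>b. c \<otimes> b) g)"
    using False poly_mult_const'(1)[OF RX_set[OF assms(2)] assms(1)]
    by (simp add: poly_of_const_def univ_poly_mult)
  then show ?thesis using scalar_coeff[OF assms(1)] normalize_coeff by metis
qed

lemma coeff_RX_add:
  assumes "f \<in> carrier (poly_ring R)" "g \<in> carrier (poly_ring R)"
  shows "coeff (f \<oplus>\<^bsub>poly_ring R\<^esub> g) i = coeff f i \<oplus> coeff g i"
  using poly_add_coeff[OF RX_set[OF assms(1)] RX_set[OF assms(2)]]
  by (simp add: univ_poly_add)

lemma coeff_set_iff:
  assumes "\<zero> \<in> I"
  shows "(\<forall>i. coeff g i \<in> I) \<longleftrightarrow> set g \<subseteq> I"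
proof
  assume "\<forall>i. coeff g i \<in> I" then show "set g \<subseteq> I"
    using coeff_img_restrict[of g] by (metis image_subsetI)
next
  assume s: "set g \<subseteq> I"
  show "\<forall>i. coeff g i \<in> I"
  proof
    fix i show "coeff g i \<in> I"
    proof (cases "i < length g")
      case True then show ?thesis using coeff_img_restrict[of g] s by auto
    next
      case False then show ?thesis using coeff_length assms by simp
    qed
  qed
qed

lemma coeff_map_rev:
  "coeff (map F (rev [0..<n])) i = (if i < n then F i else \<zero>)"
proof (cases "i < n")
  case True
  have "coeff (map F (rev [0..<n])) i = (map F (rev [0..<n])) ! (n - 1 - i)"
    using True by (subst coeff_nth) auto
  also have "\<dots> = F i" using True by (simp add: rev_nth)
  finally show ?thesis using True by simp
next
  case False then show ?thesis using coeff_length[of "map F (rev [0..<n])" i] by simp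
qed

lemma factor_out:
  assumes "\<pi> \<in> carrier R" "g \<in> carrier (poly_ring R)" "set g \<subseteq> PIdl \<pi>"
  shows "\<exists>h \<in> carrier (poly_ring R). g = poly_of_const \<pi> \<otimes>\<^bsub>poly_ring R\<^esub> h"
proof (cases "g = []")
  case True
  have "poly_of_const \<pi> \<otimes>\<^bsub>poly_ring R\<^esub> [] = []"
    using poly_mult_zero(2)[OF RX_set[OF poc_carrier[OF assms(1)]]] by (simp add: univ_poly_mult)
  then show ?thesis using True univ_poly_zero_closed by metis
next
  case False
  define k where "k = (\<lambda>x. SOME k. k \<in> carrier R \<and> x = k \<otimes> \<pi>)"
  have kx: "k x \<in> carrier R \<and> x = k x \<otimes> \<pi>" if "x \<in> set g" for x
  proof -
    have "\<exists>k. k \<in> carrier R \<and> x = k \<otimes> \<pi>" using assms(3) that unfolding cgenideal_def by auto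
    then show ?thesis unfolding k_def by (rule someI_ex)
  qed
  define h where "h = map k g"
  have gpol: "polynomial (carrier R) g" using assms(2) RX_carrier by simp
  have lg: "lead_coeff g \<noteq> \<zero>" "hd g \<in> set g" using gpol False by (auto simp: polynomial_def)
  have pi0: "\<pi> \<noteq> \<zero>" using kx[OF lg(2)] lg(1) by auto
  have "k (hd g) \<noteq> \<zero>" using kx[OF lg(2)] lg(1) assms(1) by (metis l_null)
  then have hpol: "polynomial (carrier R) h"
    unfolding polynomial_def h_def using kx[OF lg(2)] kx False lg assms(1) by (auto simp: hd_map)
  have "poly_of_const \<pi> = [\<pi>]" using pi0 by (simp add: poly_of_const_def)
  then have "poly_of_const \<pi> \<otimes>\<^bsub>poly_ring R\<^esub> h = map (\<lambda>b. \<pi> \<otimes> b) h"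
    using poly_mult_const(1)[OF carrier_is_subring hpol] pi0 assms(1) by (simp add: univ_poly_mult)
  also have "\<dots> = g" unfolding h_def
  proof (simp only: map_map, rule map_idI, simp)
    fix x assume "x \<in> set g"
    then show "\<pi> \<otimes> k x = x" using kx[of x] assms(1) m_comm by metis
  qed
  finally show ?thesis using hpol RX_carrier by auto
qed

end

context domain begin

lemma coeff_neg_map: "coeff (map (\<lambda>b. \<ominus> b) p) = (\<lambda>i. \<ominus> coeff p i)"
  by (induction p) auto

lemma coeff_RX_neg:
  assumes "f \<in> carrier (poly_ring R)"
  shows "coeff (\<ominus>\<^bsub>poly_ring R\<^esub> f) i = \<ominus> coeff f i"
  using univ_poly_a_inv_def'[OF carrier_is_subring assms] coeff_neg_map by simp

lemma exists_max_bad: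
  assumes "\<zero> \<in> M" "\<not> set g \<subseteq> M"
  shows "\<exists>n < length g. coeff g n \<notin> M \<and> (\<forall>i>n. coeff g i \<in> M)"
proof -
  define S where "S = {i. coeff g i \<notin> M}"
  have sub: "S \<subseteq> {..<length g}"
  proof
    fix i assume "i \<in> S"
    then have "coeff g i \<noteq> \<zero>" using assms(1) unfolding S_def by auto
    then show "i \<in> {..<length g}" using coeff_length[of g i] by (cases "i < length g") auto
  qed
  have "\<exists>i. coeff g i \<notin> M" using coeff_set_iff[OF assms(1), of g] assms(2) by blast
  then have ne: "S \<noteq> {}" unfolding S_def by blast
  have fin: "finite S" using sub finite_subset by blast
  have m: "Max S \<in> S" using Max_in[OF fin ne] .
  have "\<forall>i>Max S. coeff g i \<in> M"
  proof (intro allI impI)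
    fix i assume "i > Max S"
    then have "i \<notin> S" using Max_ge[OF fin, of i] by auto
    then show "coeff g i \<in> M" unfolding S_def by blast
  qed
  moreover have "Max S < length g" using m sub by blast
  moreover have "coeff g (Max S) \<notin> M" using m unfolding S_def by blast
  ultimately show ?thesis by blast
qed

end

context domain begin

lemma monic_gen:
  assumes pi: "\<pi> \<in> carrier R"
    and inv: "\<And>c. c \<in> carrier R \<Longrightarrow> c \<notin> PIdl \<pi> \<Longrightarrow> \<exists>c'\<in>carrier R. c' \<otimes> c \<ominus> \<one> \<in> PIdl \<pi>"
    and P: "ideal P (poly_ring R)" and one: "\<one>\<^bsub>poly_ring R\<^esub> \<notin> P"
    and piP: "poly_of_const \<pi> \<in> P"
    and g0: "g0 \<in> P" "\<not> set g0 \<subseteq> PIdl \<pi>"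
  shows "\<exists>f \<in> P. f \<noteq> [] \<and> lead_coeff f = \<one> \<and> degree f \<ge> 1 \<and>
     (\<forall>h\<in>P. \<exists>u\<in>carrier (poly_ring R). \<exists>v\<in>carrier (poly_ring R).
         h = poly_of_const \<pi> \<otimes>\<^bsub>poly_ring R\<^esub> u \<oplus>\<^bsub>poly_ring R\<^esub> f \<otimes>\<^bsub>poly_ring R\<^esub> v)"
proof -
  interpret UP: domain "poly_ring R" by (rule RX_domain)
  interpret PI: ideal P "poly_ring R" by (rule P)
  define M where "M = PIdl \<pi>"
  have Mi: "ideal M R" unfolding M_def by (rule cgenideal_ideal[OF pi])
  interpret MI: ideal M R by (rule Mi)
  have M0: "\<zero> \<in> M" by (rule additive_subgroup.zero_closed[OF ideal.axioms(1)[OF Mi]])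
  have Pc: "x \<in> carrier (poly_ring R)" if "x \<in> P" for x using that PI.Icarr by blast
  define E where "E = {n. \<exists>g\<in>P. coeff g n \<notin> M \<and> (\<forall>i>n. coeff g i \<in> M)}"
  have bad: "\<exists>n < length g. n \<in> E" if "g \<in> P" "\<not> set g \<subseteq> M" for g
    using exists_max_bad[OF M0 that(2)] that(1) unfolding E_def by blast
  obtain n0 where "n0 \<in> E" using bad[OF g0(1)] g0(2) unfolding M_def by blast
  define e where "e = (LEAST n. n \<in> E)"
  have eE: "e \<in> E" unfolding e_def using \<open>n0 \<in> E\<close> by (rule LeastI)
  have emin: "e \<le> n" if "n \<in> E" for n unfolding e_def using that by (rule Least_le)
  obtain g where g: "g \<in> P" "coeff g e \<notin> M" "\<forall>i>e. coeff g i \<in> M" using eE unfolding E_def by blast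
  have gc: "g \<in> carrier (poly_ring R)" using Pc g(1) .
  have gcoef: "coeff g i \<in> carrier R" for i using coeff_in_carrier[OF RX_set[OF gc]] .
  obtain c' where c': "c' \<in> carrier R" "c' \<otimes> coeff g e \<ominus> \<one> \<in> M"
    using inv[OF gcoef g(2)[unfolded M_def]] unfolding M_def by blast
  define F where "F = (\<lambda>i. if i = e then \<one> else c' \<otimes> coeff g i)"
  define f where "f = map F (rev [0..<Suc e])"
  have Fc: "F i \<in> carrier R" for i unfolding F_def using c' gcoef by auto
  have fne: "f \<noteq> []" unfolding f_def by simp
  have fhd: "lead_coeff f = \<one>" unfolding f_def F_def by simp
  have fdeg: "degree f = e" unfolding f_def by simp
  have fc: "f \<in> carrier (poly_ring R)" unfolding RX_carrier polynomial_def
    using fhd Fc unfolding f_def by auto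
  have fcoef: "coeff f i = (if i < Suc e then F i else \<zero>)" for i unfolding f_def by (rule coeff_map_rev)
  define A where "A = poly_of_const c' \<otimes>\<^bsub>poly_ring R\<^esub> g"
  have Ac: "A \<in> carrier (poly_ring R)" unfolding A_def using poc_carrier[OF c'(1)] gc by simp
  have AP: "A \<in> P" unfolding A_def using PI.I_l_closed[OF g(1) poc_carrier[OF c'(1)]] .
  define D where "D = A \<oplus>\<^bsub>poly_ring R\<^esub> (\<ominus>\<^bsub>poly_ring R\<^esub> f)"
  have Dc: "D \<in> carrier (poly_ring R)" unfolding D_def using Ac fc by simp
  have Dcoef: "coeff D i = c' \<otimes> coeff g i \<oplus> \<ominus> coeff f i" for i
    unfolding D_def using coeff_RX_add[OF Ac UP.a_inv_closed[OF fc]] coeff_RX_neg[OF fc]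
      coeff_poc_mult[OF c'(1) gc] unfolding A_def by simp
  have DM: "coeff D i \<in> M" for i
  proof (cases "e < i")
    case True
    then have "coeff f i = \<zero>" using fcoef[of i] by auto
    then have "coeff D i = c' \<otimes> coeff g i" using Dcoef c' gcoef by simp
    then show ?thesis using MI.I_l_closed[OF g(3)[rule_format, OF True] c'(1)] by simp
  next
    case False
    show ?thesis
    proof (cases "i = e")
      case True
      then have "coeff D i = c' \<otimes> coeff g e \<ominus> \<one>" using Dcoef fcoef unfolding F_def a_minus_def by simp
      then show ?thesis using c'(2) by simp
    next
      case False2: False
      then have "coeff f i = c' \<otimes> coeff g i" using False fcoef unfolding F_def by simp
      then have "coeff D i = \<zero>" using Dcoef c' gcoef by (simp add: r_neg)
      then show ?thesis using M0 by simp
    qed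
  qed
  have "set D \<subseteq> M" using coeff_set_iff[OF M0, of D] DM by blast
  then obtain hD where hD: "hD \<in> carrier (poly_ring R)" "D = poly_of_const \<pi> \<otimes>\<^bsub>poly_ring R\<^esub> hD"
    using factor_out[OF pi Dc] unfolding M_def by blast
  have DP: "D \<in> P" using PI.I_r_closed[OF piP hD(1)] hD(2) by simp
  have "f = A \<oplus>\<^bsub>poly_ring R\<^esub> (\<ominus>\<^bsub>poly_ring R\<^esub> D)"
    unfolding D_def using Ac fc
    by (simp add: UP.minus_add UP.a_assoc[symmetric] UP.r_neg)
  then have fP: "f \<in> P" using AP DP PI.a_closed PI.a_inv_closed by simp
  have deg1: "degree f \<ge> 1"
  proof (rule ccontr)
    assume "\<not> 1 \<le> degree f"
    then have "f = [\<one>]" using fne fhd by (cases f) (auto simp: Suc_le_eq)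
    then show False using fP one by (simp add: univ_poly_one)
  qed
  have div: "\<exists>u\<in>carrier (poly_ring R). \<exists>v\<in>carrier (poly_ring R).
         h = poly_of_const \<pi> \<otimes>\<^bsub>poly_ring R\<^esub> u \<oplus>\<^bsub>poly_ring R\<^esub> f \<otimes>\<^bsub>poly_ring R\<^esub> v" if hP: "h \<in> P" for h
  proof -
    have hc: "h \<in> carrier (poly_ring R)" using Pc hP .
    have "lead_coeff f \<in> Units (R\<lparr>carrier := carrier R\<rparr>)" using fhd by simp
    then obtain q r where qr: "polynomial (carrier R) q" "polynomial (carrier R) r"
      "h = (f \<otimes>\<^bsub>poly_ring R\<^esub> q) \<oplus>\<^bsub>poly_ring R\<^esub> r" "r = [] \<or> degree r < degree f"
      using long_division_theorem[OF carrier_is_subring hc[unfolded RX_carrier] fc[unfolded RX_carrier] fne]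
      by blast
    have qc: "q \<in> carrier (poly_ring R)" "r \<in> carrier (poly_ring R)" using qr(1,2) RX_carrier by auto
    have fqc: "f \<otimes>\<^bsub>poly_ring R\<^esub> q \<in> carrier (poly_ring R)" using fc qc by simp
    have "r = h \<oplus>\<^bsub>poly_ring R\<^esub> (\<ominus>\<^bsub>poly_ring R\<^esub> (f \<otimes>\<^bsub>poly_ring R\<^esub> q))"
      using qr(3) fqc qc by (simp add: UP.a_ac UP.minus_add UP.a_assoc[symmetric] UP.r_neg UP.l_neg)
    then have rP: "r \<in> P" using hP PI.I_r_closed[OF fP qc(1)] PI.a_closed PI.a_inv_closed by simp
    have rM: "set r \<subseteq> M"
    proof (rule ccontr)
      assume "\<not> set r \<subseteq> M"
      then obtain n where n: "n < length r" "n \<in> E" using bad[OF rP] by blast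
      then have "r \<noteq> []" by auto
      then have "n < degree f" using n(1) qr(4) by auto
      then show False using emin[OF n(2)] fdeg by simp
    qed
    obtain u where u: "u \<in> carrier (poly_ring R)" "r = poly_of_const \<pi> \<otimes>\<^bsub>poly_ring R\<^esub> u"
      using factor_out[OF pi qc(2) rM[unfolded M_def]] by blast
    have "h = poly_of_const \<pi> \<otimes>\<^bsub>poly_ring R\<^esub> u \<oplus>\<^bsub>poly_ring R\<^esub> f \<otimes>\<^bsub>poly_ring R\<^esub> q"
      using qr(3) u(2) fqc qc(2) UP.a_comm by simp
    then show ?thesis using u(1) qc(1) by blast
  qed
  show ?thesis using fP fne fhd deg1 div by blast
qed

end

context domain begin

lemma const_factor:
  assumes a: "a \<in> carrier R" and b: "b \<in> carrier R" and u: "u \<in> carrier (poly_ring R)"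
    and eq: "poly_of_const a = poly_of_const b \<otimes>\<^bsub>poly_ring R\<^esub> u"
  shows "a \<in> PIdl b"
proof -
  have "a = const_term (poly_of_const b \<otimes>\<^bsub>poly_ring R\<^esub> u)" using eq poc_const_term[OF a] by simp
  also have "\<dots> = b \<otimes> const_term u"
    using const_term_simprules_shell(2)[OF carrier_is_subring poc_carrier[OF b] u] poc_const_term[OF b] by simp
  also have "\<dots> = const_term u \<otimes> b"
    using const_term_simprules_shell(1)[OF carrier_is_subring u] b m_comm by simp
  finally show ?thesis using const_term_simprules_shell(1)[OF carrier_is_subring u]
    unfolding cgenideal_def by blast
qed

lemma final_step:
  assumes a: "a \<in> carrier R" and b: "b \<in> carrier R"
    and u: "u \<in> carrier (poly_ring R)" and v: "v \<in> carrier (poly_ring R)"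
    and f: "f \<in> carrier (poly_ring R)" and fm: "f = [] \<or> (lead_coeff f = \<one> \<and> degree f \<ge> 1)"
    and eq: "poly_of_const a = poly_of_const b \<otimes>\<^bsub>poly_ring R\<^esub> u \<oplus>\<^bsub>poly_ring R\<^esub> f \<otimes>\<^bsub>poly_ring R\<^esub> v"
  shows "a \<in> PIdl b"
proof -
  interpret UP: domain "poly_ring R" by (rule RX_domain)
  have pb: "poly_of_const b \<in> carrier (poly_ring R)" using poc_carrier[OF b] .
  show ?thesis
  proof (cases "f = []")
    case True
    then have "f = \<zero>\<^bsub>poly_ring R\<^esub>" by (simp add: univ_poly_zero)
    then have "f \<otimes>\<^bsub>poly_ring R\<^esub> v = \<zero>\<^bsub>poly_ring R\<^esub>" using v by simp
    then have "poly_of_const a = poly_of_const b \<otimes>\<^bsub>poly_ring R\<^esub> u" using eq pb u by simp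
    then show ?thesis using const_factor[OF a b u] by simp
  next
    case False
    then have fm: "lead_coeff f = \<one>" "degree f \<ge> 1" using fm by auto
    have "lead_coeff f \<in> Units (R\<lparr>carrier := carrier R\<rparr>)" using fm by simp
    then obtain q r where qr: "polynomial (carrier R) q" "polynomial (carrier R) r"
      "u = (f \<otimes>\<^bsub>poly_ring R\<^esub> q) \<oplus>\<^bsub>poly_ring R\<^esub> r" "r = [] \<or> degree r < degree f"
      using long_division_theorem[OF carrier_is_subring u[unfolded RX_carrier] f[unfolded RX_carrier] False]
      by blast
    have qc: "q \<in> carrier (poly_ring R)" "r \<in> carrier (poly_ring R)" using qr(1,2) RX_carrier by auto
    define w where "w = v \<oplus>\<^bsub>poly_ring R\<^esub> poly_of_const b \<otimes>\<^bsub>poly_ring R\<^esub> q"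
    have wc: "w \<in> carrier (poly_ring R)" unfolding w_def using v pb qc by simp
    define Y where "Y = poly_of_const b \<otimes>\<^bsub>poly_ring R\<^esub> r"
    have Yc: "Y \<in> carrier (poly_ring R)" unfolding Y_def using pb qc by simp
    have eq2: "poly_of_const a = Y \<oplus>\<^bsub>poly_ring R\<^esub> f \<otimes>\<^bsub>poly_ring R\<^esub> w"
      unfolding eq qr(3) Y_def w_def using pb qc f v
      by (simp add: UP.r_distr UP.l_distr UP.m_lcomm UP.a_ac)
    have fw: "f \<otimes>\<^bsub>poly_ring R\<^esub> w = poly_of_const a \<oplus>\<^bsub>poly_ring R\<^esub> (\<ominus>\<^bsub>poly_ring R\<^esub> Y)"
      using eq2 Yc f wc poc_carrier[OF a]
      by (simp add: UP.a_ac UP.minus_add UP.a_assoc[symmetric] UP.r_neg UP.l_neg)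
    have w0: "w = []"
    proof (rule ccontr)
      assume wne: "w \<noteq> []"
      have "degree (f \<otimes>\<^bsub>poly_ring R\<^esub> w) = degree f + degree w"
        using poly_mult_degree_eq[OF carrier_is_subring f[unfolded RX_carrier] wc[unfolded RX_carrier]]
          False wne by (simp add: univ_poly_mult)
      then have d1: "degree (f \<otimes>\<^bsub>poly_ring R\<^esub> w) \<ge> degree f" by simp
      have dY: "degree Y < degree f"
      proof -
        have "degree Y \<le> degree r"
          using poly_mult_degree_eq[OF carrier_is_subring pb[unfolded RX_carrier] qc(2)[unfolded RX_carrier]]
          poc_degree[of b] unfolding Y_def univ_poly_mult by (auto split: if_splits)
        then show ?thesis using qr(4) fm(2) by auto
      qed
      have "degree (poly_of_const a \<oplus>\<^bsub>poly_ring R\<^esub> (\<ominus>\<^bsub>poly_ring R\<^esub> Y))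
              \<le> max (degree (poly_of_const a)) (degree (\<ominus>\<^bsub>poly_ring R\<^esub> Y))"
        using poly_add_degree by (simp add: univ_poly_add)
      also have "\<dots> = degree Y" using univ_poly_a_inv_degree[OF carrier_is_subring Yc] poc_degree by simp
      finally show False using dY d1 fw by simp
    qed
    then have "w = \<zero>\<^bsub>poly_ring R\<^esub>" by (simp add: univ_poly_zero)
    then have "f \<otimes>\<^bsub>poly_ring R\<^esub> w = \<zero>\<^bsub>poly_ring R\<^esub>" using f by simp
    then have "poly_of_const a = poly_of_const b \<otimes>\<^bsub>poly_ring R\<^esub> r" using eq2 Yc unfolding Y_def by simp
    then show ?thesis using const_factor[OF a b qc(2)] by simp
  qed
qed

end

context principal_domain begin

lemma inv_mod:
  assumes pi: "\<pi> \<in> carrier R" "\<pi> \<noteq> \<zero>" and pr: "primeideal (PIdl \<pi>) R"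
    and c: "c \<in> carrier R" "c \<notin> PIdl \<pi>"
  shows "\<exists>c'\<in>carrier R. c' \<otimes> c \<ominus> \<one> \<in> PIdl \<pi>"
proof -
  have "ring_prime \<pi>" using primeideal_iff_prime[of \<pi>] pi pr by simp
  then have "ring_irreducible \<pi>" using primeness_condition[OF pi(1)] by simp
  then have mx: "maximalideal (PIdl \<pi>) R" using irreducible_imp_maximalideal[OF pi(1)] by simp
  define J where "J = set_add R (PIdl c) (PIdl \<pi>)"
  have Ji: "ideal J R" unfolding J_def by (rule add_ideals[OF cgenideal_ideal[OF c(1)] cgenideal_ideal[OF pi(1)]])
  have z: "\<zero> \<in> PIdl c" "\<zero> \<in> PIdl \<pi>"
    using additive_subgroup.zero_closed[OF ideal.axioms(1)[OF cgenideal_ideal[OF c(1)]]]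
      additive_subgroup.zero_closed[OF ideal.axioms(1)[OF cgenideal_ideal[OF pi(1)]]] by auto
  have sub: "PIdl \<pi> \<subseteq> J"
  proof
    fix x assume x: "x \<in> PIdl \<pi>"
    then have "x \<in> carrier R" using ideal.Icarr[OF cgenideal_ideal[OF pi(1)]] by blast
    then have "x = \<zero> \<oplus> x" by simp
    then show "x \<in> J" unfolding J_def set_add_def' using z x by blast
  qed
  have "c = c \<oplus> \<zero>" using c by simp
  then have cJ: "c \<in> J" unfolding J_def set_add_def' using z cgenideal_self[OF c(1)] by blast
  have "J \<subseteq> carrier R" using ideal.Icarr[OF Ji] by blast
  then have "J = PIdl \<pi> \<or> J = carrier R" using maximalideal.I_maximal[OF mx Ji sub] by blast
  then have "J = carrier R" using cJ c(2) by blast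
  then have "\<one> \<in> J" by simp
  then obtain x y where xy: "x \<in> PIdl c" "y \<in> PIdl \<pi>" "\<one> = x \<oplus> y" unfolding J_def set_add_def' by blast
  obtain k where k: "k \<in> carrier R" "x = k \<otimes> c" using xy(1) unfolding cgenideal_def by blast
  have yc: "y \<in> carrier R" using xy(2) ideal.Icarr[OF cgenideal_ideal[OF pi(1)]] by blast
  have "k \<otimes> c \<ominus> \<one> = \<ominus> y" using xy(3) k c yc
    by (simp add: a_minus_def minus_add r_neg1 a_assoc[symmetric] r_neg)
  then show ?thesis
    using k(1) additive_subgroup.a_inv_closed[OF ideal.axioms(1)[OF cgenideal_ideal[OF pi(1)]] xy(2)] by metis
qed

lemma main_ps:
  assumes Pp: "primeideal P (poly_ring R)"
  shows "power_stable R P"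
proof -
  interpret UP: domain "poly_ring R" by (rule RX_domain)
  interpret PI: primeideal P "poly_ring R" by (rule Pp)
  have P: "ideal P (poly_ring R)" by (rule PI.is_ideal)
  have one: "\<one>\<^bsub>poly_ring R\<^esub> \<notin> P" using PI.one_imp_carrier PI.I_notcarr by metis
  define p where "p = contr R P"
  have pdef: "p = {r \<in> carrier R. poly_of_const r \<in> P}" unfolding p_def contr_def ..
  have pprime: "primeideal p R"
    unfolding pdef by (rule ring_hom_ring.primeideal_vimage[OF poc_hom is_cring Pp])
  obtain \<pi> where pi: "\<pi> \<in> carrier R" "p = PIdl \<pi>"
    using exists_gen[OF primeideal.axioms(1)[OF pprime]] by blast
  have piP: "poly_of_const \<pi> \<in> P" using cgenideal_self[OF pi(1)] pi(2) pdef by blast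
  have pc: "poly_of_const \<pi> \<in> carrier (poly_ring R)" using poc_carrier[OF pi(1)] .
  show ?thesis unfolding power_stable_def
  proof (intro allI impI)
    fix t :: nat assume t: "t \<ge> 1"
    then obtain n where tn: "t = Suc n" by (cases t) auto
    have rhs: "ideal_pow R (contr R P) t = PIdl (\<pi> [^] t)"
      using ideal_pow_PIdl[OF pi(1)] pi(2) unfolding p_def by simp
    have Pti: "ideal (ideal_pow (poly_ring R) P t) (poly_ring R)" by (rule UP.ideal_pow_ideal[OF P])
    have powc: "poly_of_const (\<pi> [^] t) = poly_of_const \<pi> [^]\<^bsub>poly_ring R\<^esub> t"
      using ring_hom_ring.hom_nat_pow[OF poc_hom pi(1)] .
    show "contr R (ideal_pow (poly_ring R) P t) = ideal_pow R (contr R P) t"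
      unfolding rhs
    proof
      show "PIdl (\<pi> [^] t) \<subseteq> contr R (ideal_pow (poly_ring R) P t)"
      proof
        fix x assume "x \<in> PIdl (\<pi> [^] t)"
        then obtain k where k: "k \<in> carrier R" "x = k \<otimes> \<pi> [^] t" unfolding cgenideal_def by blast
        have xc: "x \<in> carrier R" using k pi by simp
        have "poly_of_const x = poly_of_const k \<otimes>\<^bsub>poly_ring R\<^esub> poly_of_const \<pi> [^]\<^bsub>poly_ring R\<^esub> t"
          using k pi ring_hom_mult[OF ring_hom_ring.homh[OF poc_hom], of k "\<pi> [^] t"] powc by simp
        moreover have "poly_of_const \<pi> [^]\<^bsub>poly_ring R\<^esub> t \<in> ideal_pow (poly_ring R) P t"
          by (rule UP.pow_mem[OF P piP])
        ultimately have "poly_of_const x \<in> ideal_pow (poly_ring R) P t"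
          using ideal.I_l_closed[OF Pti _ poc_carrier[OF k(1)]] by simp
        then show "x \<in> contr R (ideal_pow (poly_ring R) P t)" unfolding contr_def using xc by simp
      qed
    next
      show "contr R (ideal_pow (poly_ring R) P t) \<subseteq> PIdl (\<pi> [^] t)"
      proof
        fix a assume "a \<in> contr R (ideal_pow (poly_ring R) P t)"
        then have a: "a \<in> carrier R" "poly_of_const a \<in> ideal_pow (poly_ring R) P t"
          unfolding contr_def by auto
        show "a \<in> PIdl (\<pi> [^] t)"
        proof (cases "\<pi> = \<zero>")
          case True
          have "poly_of_const a \<in> P" using a(2) UP.ideal_pow_sub[OF P, of n] tn by blast
          then have "a \<in> PIdl \<zero>" using a(1) pdef pi(2) True by blast
          moreover have "\<pi> [^] t = \<zero>" using True tn by simp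
          ultimately show ?thesis by simp
        next
          case False
          have inv: "\<And>c. c \<in> carrier R \<Longrightarrow> c \<notin> PIdl \<pi> \<Longrightarrow> \<exists>c'\<in>carrier R. c' \<otimes> c \<ominus> \<one> \<in> PIdl \<pi>"
            using inv_mod[OF pi(1) False] pprime pi(2) by blast
          obtain f where f: "f \<in> carrier (poly_ring R)" "f = [] \<or> (lead_coeff f = \<one> \<and> degree f \<ge> 1)"
            "P \<subseteq> UP.lin2 (poly_of_const \<pi>) f"
          proof (cases "\<forall>g\<in>P. set g \<subseteq> PIdl \<pi>")
            case True
            have "P \<subseteq> UP.lin2 (poly_of_const \<pi>) []"
            proof
              fix g assume g: "g \<in> P"
              then have gc: "g \<in> carrier (poly_ring R)" using PI.Icarr by blast
              obtain h where h: "h \<in> carrier (poly_ring R)" "g = poly_of_const \<pi> \<otimes>\<^bsub>poly_ring R\<^esub> h"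
                using factor_out[OF pi(1) gc] True g by blast
              have "[] = \<zero>\<^bsub>poly_ring R\<^esub>" by (simp add: univ_poly_zero)
              then have "g = poly_of_const \<pi> \<otimes>\<^bsub>poly_ring R\<^esub> h \<oplus>\<^bsub>poly_ring R\<^esub> [] \<otimes>\<^bsub>poly_ring R\<^esub> \<zero>\<^bsub>poly_ring R\<^esub>"
                using h pc UP.l_null[OF UP.zero_closed] UP.r_zero[OF UP.m_closed[OF pc h(1)]]
                by (simp add: univ_poly_zero)
              then show "g \<in> UP.lin2 (poly_of_const \<pi>) []" unfolding UP.lin2_def using h(1) by blast
            qed
            then show ?thesis using that[of "[]"] univ_poly_zero_closed by blast
          next
            case False
            then obtain g0 where g0: "g0 \<in> P" "\<not> set g0 \<subseteq> PIdl \<pi>" by blast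
            obtain f where "f \<in> P" "f \<noteq> []" "lead_coeff f = \<one>" "degree f \<ge> 1"
              "\<forall>h\<in>P. \<exists>u\<in>carrier (poly_ring R). \<exists>v\<in>carrier (poly_ring R).
                h = poly_of_const \<pi> \<otimes>\<^bsub>poly_ring R\<^esub> u \<oplus>\<^bsub>poly_ring R\<^esub> f \<otimes>\<^bsub>poly_ring R\<^esub> v"
              using monic_gen[OF pi(1) inv P one piP g0] by blast
            moreover have "f \<in> carrier (poly_ring R)" using \<open>f \<in> P\<close> PI.Icarr by blast
            ultimately show ?thesis using that[of f] unfolding UP.lin2_def by blast
          qed
          have "ideal_pow (poly_ring R) P t \<subseteq> UP.lin2 (poly_of_const \<pi> [^]\<^bsub>poly_ring R\<^esub> t) f"
            by (rule UP.ideal_pow_lin2[OF pc f(1) f(3)])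
          then obtain u v where uv: "u \<in> carrier (poly_ring R)" "v \<in> carrier (poly_ring R)"
            "poly_of_const a = poly_of_const (\<pi> [^] t) \<otimes>\<^bsub>poly_ring R\<^esub> u \<oplus>\<^bsub>poly_ring R\<^esub> f \<otimes>\<^bsub>poly_ring R\<^esub> v"
            using a(2) powc unfolding UP.lin2_def by auto
          show ?thesis using final_step[OF a(1) _ uv(1,2) f(1,2) uv(3)] pi(1) by simp
        qed
      qed
    qed
  qed
qed

end

theorem corollary3p4:
  fixes R :: "('a, 'b) ring_scheme" and P :: "'a list set"
  assumes "principal_domain R"
    and "primeideal P (poly_ring R)"
  shows "power_stable R P"
  using principal_domain.main_ps[OF assms] .

end
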